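(* In the univariate contact-tracing model (described in the context), if $\alpha>\beta>0$, then for every $T\in\mathbb{N}$, every probability distribution $D$ on $\{0,1,2,\dots\}$ and every $p_T\in(0,1]$, the policy that at every step queries a node of largest recency present in the frontier is optimal.
   Context: Univariate model. Fix $T\in\mathbb{N}$, a probability distribution $D$ on $\{0,1,2,\dots\}$, constants $p_T\in(0,1]$, $\alpha\ge 0$, and a discount parameter $\beta>0$. Every node has a recency $h\in\{0,1,\dots,T\}$. Each node (index case or child of an infected node) of recency $h$ is infected independently with probability $p(h)=p_T e^{-\alpha(T-h)}$. If a node of recency $h$ is infected, then for each $j\in\{0,\dots,h-1\}$ it has $Z_j\sim D$ children of recency $j$, all counts independent across $j$ and across nodes and independent of infection statuses. Contact tracing: at step $t=0$ the frontier is a given finite multiset of index cases with known recencies. At each step $t=0,1,2,\dots$ while the frontier is nonempty, the tracer selects one frontier node and queries it, removing it from the frontier. The query reveals its infection status; if it is infected and has recency $h$, benefit $e^{-\beta(h+t)}$ is collected and its children (with their recencies) are added to the frontier; otherwise benefit $0$ is collected and nothing is added. Nodes of the same recency are indistinguishable before being queried, so a policy is a (possibly history-dependent) rule choosing at each step which recency present in the frontier to query. A policy is optimal if for every initial frontier it maximizes the expected total collected benefit over all policies. *)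

theory Defs
  imports "HOL-Probability.Probability"
begin

text \<open>Recencies are naturals; a frontier is a
multiset of recencies. A history records, for each past step, the queried recency
and the revealed outcome: None = not infected, Some C = infected with children C.\<close>

type_synonym hist = "(nat \<times> nat multiset option) list"

text \<open>A (history-dependent) policy sees the initial frontier, the history so far and
the current frontier (the latter is determined by the former two), and names a
recency to query.\<close>
type_synonym policy = "nat multiset \<Rightarrow> hist \<Rightarrow> nat multiset \<Rightarrow> nat"

definition infp :: "real \<Rightarrow> real \<Rightarrow> nat \<Rightarrow> nat \<Rightarrow> real" where
  "infp \<alpha> pT T h = pT * exp (- \<alpha> * (real T - real h))"

text \<open>Distribution of the children multiset of an infected node of recency h:
Z_j ~ D children of recency j, independently, for each j < h.\<close>
primrec kids :: "nat pmf \<Rightarrow> nat \<Rightarrow> nat multiset pmf" where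
  "kids D 0 = return_pmf {#}"
| "kids D (Suc h) =
     bind_pmf (kids D h) (\<lambda>M. map_pmf (\<lambda>z. M + replicate_mset z h) D)"

text \<open>The recency actually queried: the policy's choice if present in the frontier;
an (irrelevant) default otherwise, so that every function is a legal policy.\<close>
definition qchoice :: "nat \<Rightarrow> nat multiset \<Rightarrow> nat" where
  "qchoice r F = (if r \<in># F then r else Max_mset F)"

text \<open>Expected benefit collected during the next N steps, when the history is H
(so the current step is t = length H) and the current frontier is F.\<close>
primrec val :: "real \<Rightarrow> real \<Rightarrow> real \<Rightarrow> nat \<Rightarrow> nat pmf \<Rightarrow> policy \<Rightarrow> nat multiset
    \<Rightarrow> nat \<Rightarrow> hist \<Rightarrow> nat multiset \<Rightarrow> ennreal" where
  "val \<alpha> \<beta> pT T D pol F0 0 H F = 0"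
| "val \<alpha> \<beta> pT T D pol F0 (Suc N) H F =
    (if F = {#} then 0 else
      (let h = qchoice (pol F0 H F) F; t = length H; p = infp \<alpha> pT T h in
        ennreal p *
          (ennreal (exp (- \<beta> * (real h + real t)))
           + (\<integral>\<^sup>+ C. val \<alpha> \<beta> pT T D pol F0 N (H @ [(h, Some C)]) (F - {#h#} + C)
                 \<partial>measure_pmf (kids D h)))
        + ennreal (1 - p) * val \<alpha> \<beta> pT T D pol F0 N (H @ [(h, None)]) (F - {#h#})))"

definition total :: "real \<Rightarrow> real \<Rightarrow> real \<Rightarrow> nat \<Rightarrow> nat pmf \<Rightarrow> policy \<Rightarrow> nat multiset \<Rightarrow> ennreal" where
  "total \<alpha> \<beta> pT T D pol F0 = (SUP N. val \<alpha> \<beta> pT T D pol F0 N [] F0)"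

definition optimal :: "real \<Rightarrow> real \<Rightarrow> real \<Rightarrow> nat \<Rightarrow> nat pmf \<Rightarrow> policy \<Rightarrow> bool" where
  "optimal \<alpha> \<beta> pT T D pol \<longleftrightarrow>
     (\<forall>F0. (\<forall>h\<in>#F0. h \<le> T) \<longrightarrow>
        (\<forall>pol'. total \<alpha> \<beta> pT T D pol' F0 \<le> total \<alpha> \<beta> pT T D pol F0))"

definition greedy :: policy where
  "greedy F0 H F = Max_mset F"

end

theory Submission
  imports Defs
begin

lemma pmf_fubini:
  "(\<integral>\<^sup>+a. \<integral>\<^sup>+b. f a b \<partial>measure_pmf B \<partial>measure_pmf A) = (\<integral>\<^sup>+b. \<integral>\<^sup>+a. f a b \<partial>measure_pmf A \<partial>measure_pmf B)"
proof -
  have "(\<integral>\<^sup>+a. \<integral>\<^sup>+b. f a b \<partial>measure_pmf B \<partial>measure_pmf A) = (\<integral>\<^sup>+x. f (fst x) (snd x) \<partial>pair_pmf A B)"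
    by (simp add: nn_integral_pair_pmf')
  also have "\<dots> = (\<integral>\<^sup>+x. f (snd x) (fst x) \<partial>pair_pmf B A)"
    by (subst pair_commute_pmf) (simp add: case_prod_unfold)
  also have "\<dots> = (\<integral>\<^sup>+b. \<integral>\<^sup>+a. f a b \<partial>measure_pmf A \<partial>measure_pmf B)"
    by (simp add: nn_integral_pair_pmf')
  finally show ?thesis .
qed

lemma kids_set: "C \<in> set_pmf (kids D h) \<Longrightarrow> \<forall>x\<in>#C. x < h"
proof (induction h arbitrary: C)
  case 0 then show ?case by simp
next
  case (Suc h)
  then show ?case by (fastforce split: if_splits intro: less_SucI)
qed

lemma pmf_int_lin:
  "(\<integral>\<^sup>+x. a * (b + f x) + c * g x \<partial>measure_pmf M) =
     a * b + a * (\<integral>\<^sup>+x. f x \<partial>measure_pmf M) + c * (\<integral>\<^sup>+x. g x \<partial>measure_pmf M)"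
  by (simp add: nn_integral_add nn_integral_cmult distrib_left measure_pmf.emeasure_space_1)

lemma ring_eq1:
  fixes a b c d e f I J K L :: "'a::comm_semiring_1"
  shows "a * e + a * (b * f + b * I + c * J) + d * (b * f + b * K + c * L)
    = a * e + (a + d) * (b * f) + (a * b * I + a * c * J + d * b * K + d * c * L)"
  by (simp add: distrib_left distrib_right ac_simps)
lemma ring_eq2:
  fixes a b c d e f I J K L :: "'a::comm_semiring_1"
  shows "b * e + b * (a * f + a * I + d * K) + c * (a * f + a * J + d * L)
    = b * e + (b + c) * (a * f) + (a * b * I + a * c * J + d * b * K + d * c * L)"
  by (simp add: distrib_left distrib_right ac_simps)

locale ct =
  fixes \<alpha> \<beta> pT :: real and T :: nat and D :: "nat pmf"
  assumes ab: "\<beta> < \<alpha>" and b0: "0 < \<beta>" and p0: "0 < pT" and p1: "pT \<le> 1"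
begin

definition step :: "(nat multiset \<Rightarrow> ennreal) \<Rightarrow> nat \<Rightarrow> nat multiset \<Rightarrow> nat \<Rightarrow> ennreal" where
  "step V t F h = ennreal (infp \<alpha> pT T h) *
      (ennreal (exp (- \<beta> * (real h + real t))) + (\<integral>\<^sup>+C. V (F - {#h#} + C) \<partial>measure_pmf (kids D h)))
    + ennreal (1 - infp \<alpha> pT T h) * V (F - {#h#})"

primrec W :: "nat \<Rightarrow> nat \<Rightarrow> nat multiset \<Rightarrow> ennreal" where
  "W 0 t F = 0"
| "W (Suc N) t F = (if F = {#} then 0 else Max (step (W N (Suc t)) t F ` set_mset F))"

lemma step_mono: "(\<And>F. V F \<le> V' F) \<Longrightarrow> step V t F h \<le> step V' t F h"
  unfolding step_def
  by (intro add_mono mult_left_mono nn_integral_mono) auto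

lemma W_ge: "F' \<noteq> {#} \<Longrightarrow> h \<in># F' \<Longrightarrow> step (W N (Suc t)) t F' h \<le> W (Suc N) t F'"
  by simp

lemma val_le: "val \<alpha> \<beta> pT T D pol F0 N H F \<le> W N (length H) F"
proof (induction N arbitrary: H F)
  case 0 then show ?case by simp
next
  case (Suc N)
  show ?case
  proof (cases "F = {#}")
    case True then show ?thesis by simp
  next
    case False
    define h where "h = qchoice (pol F0 H F) F"
    have hF: "h \<in># F" using False unfolding h_def qchoice_def by auto
    have IH: "\<And>x. val \<alpha> \<beta> pT T D pol F0 N (H @ [x]) F' \<le> W N (Suc (length H)) F'" for F'
      using Suc.IH by (metis length_append_singleton)
    have "val \<alpha> \<beta> pT T D pol F0 (Suc N) H F = ennreal (infp \<alpha> pT T h) *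
          (ennreal (exp (- \<beta> * (real h + real (length H))))
           + (\<integral>\<^sup>+ C. val \<alpha> \<beta> pT T D pol F0 N (H @ [(h, Some C)]) (F - {#h#} + C)
                 \<partial>measure_pmf (kids D h)))
        + ennreal (1 - infp \<alpha> pT T h) * val \<alpha> \<beta> pT T D pol F0 N (H @ [(h, None)]) (F - {#h#})"
      using False by (simp add: Let_def h_def)
    also have "\<dots> \<le> step (W N (Suc (length H))) (length H) F h"
      unfolding step_def
      by (intro add_mono mult_left_mono nn_integral_mono IH) auto
    also have "\<dots> \<le> W (Suc N) (length H) F" using False hF by simp
    finally show ?thesis .
  qed
qed


lemma infp_le1: "h \<le> T \<Longrightarrow> infp \<alpha> pT T h \<le> 1"
proof -
  assume "h \<le> T"
  then have "exp (- \<alpha> * (real T - real h)) \<le> 1" using ab b0 by simp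
  then show ?thesis unfolding infp_def using p0 p1
    by (metis less_eq_real_def mult_le_one exp_ge_zero)
qed

lemma infp_ge0: "0 \<le> infp \<alpha> pT T h"
  unfolding infp_def using p0 by simp

lemma w_mono:
  assumes "h \<le> m"
  shows "infp \<alpha> pT T h * exp (- \<beta> * (real h + x)) \<le> infp \<alpha> pT T m * exp (- \<beta> * (real m + x))"
proof -
  have "(\<alpha> - \<beta>) * real h \<le> (\<alpha> - \<beta>) * real m"
    using assms ab by (intro mult_left_mono) auto
  then have "- \<alpha> * (real T - real h) + - \<beta> * (real h + x) \<le> - \<alpha> * (real T - real m) + - \<beta> * (real m + x)"
    by (simp add: algebra_simps)
  then have "exp (- \<alpha> * (real T - real h) + - \<beta> * (real h + x)) \<le> exp (- \<alpha> * (real T - real m) + - \<beta> * (real m + x))"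
    by simp
  then show ?thesis unfolding infp_def exp_add using p0
    by (simp add: mult.assoc)
qed

lemma swap_ineq:
  assumes "h \<le> m"
  shows "infp \<alpha> pT T h * exp (- \<beta> * (real h + real t)) + infp \<alpha> pT T m * exp (- \<beta> * (real m + real (Suc t)))
     \<le> infp \<alpha> pT T m * exp (- \<beta> * (real m + real t)) + infp \<alpha> pT T h * exp (- \<beta> * (real h + real (Suc t)))"
proof -
  define a where "a = infp \<alpha> pT T h * exp (- \<beta> * (real h + real t))"
  define b where "b = infp \<alpha> pT T m * exp (- \<beta> * (real m + real t))"
  define e where "e = exp (- \<beta>)"
  have ab': "a \<le> b" unfolding a_def b_def using w_mono[OF assms] .
  have e1: "e \<le> 1" unfolding e_def using b0 by simp
  have h1: "infp \<alpha> pT T h * exp (- \<beta> * (real h + real (Suc t))) = a * e"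
    unfolding a_def e_def by (simp add: algebra_simps flip: exp_add)
  have h2: "infp \<alpha> pT T m * exp (- \<beta> * (real m + real (Suc t))) = b * e"
    unfolding b_def e_def by (simp add: algebra_simps flip: exp_add)
  have "a * (1 - e) \<le> b * (1 - e)" using ab' e1 by (intro mult_right_mono) auto
  then show ?thesis unfolding h1 h2 a_def[symmetric] b_def[symmetric] by (simp add: algebra_simps)
qed

lemma Max_mset_ge: "x \<in># F \<Longrightarrow> x \<le> Max_mset F"
  by simp

lemma key:
  "\<forall>t F h. (\<forall>x\<in>#F. x \<le> T) \<longrightarrow> h \<in># F \<longrightarrow>
      step (W N (Suc t)) t F h \<le> step (W N (Suc t)) t F (Max_mset F)"
proof (induction N)
  case 0
  show ?case
  proof (intro allI impI)
    fix t F h assume FT: "\<forall>x\<in>#F. x \<le> T" and hF: "h \<in># F"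
    have hm: "h \<le> Max_mset F" using hF by simp
    show "step (W 0 (Suc t)) t F h \<le> step (W 0 (Suc t)) t F (Max_mset F)"
      unfolding step_def using w_mono[OF hm, of "real t"] infp_ge0
      by (simp add: ennreal_mult'[symmetric] ennreal_leI)
  qed
next
  case (Suc K)
  have Wc: "W (Suc K) t F = step (W K (Suc t)) t F (Max_mset F)"
    if "F \<noteq> {#}" "\<forall>x\<in>#F. x \<le> T" for t F
  proof -
    have "Max (step (W K (Suc t)) t F ` set_mset F) = step (W K (Suc t)) t F (Max_mset F)"
      apply (rule Max_eqI)
      using that Suc.IH by auto
    then show ?thesis using that by simp
  qed
  show ?case
  proof (intro allI impI)
    fix t F h assume FT: "\<forall>x\<in>#F. x \<le> T" and hF: "h \<in># F"
    define m where "m = Max_mset F"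
    have hm: "h \<le> m" using hF unfolding m_def by simp
    show "step (W (Suc K) (Suc t)) t F h \<le> step (W (Suc K) (Suc t)) t F (Max_mset F)"
    proof (cases "h = m")
      case True then show ?thesis by (simp add: m_def)
    next
      case False
      have mF: "m \<in># F" unfolding m_def using hF by (metis Max_in empty_iff finite_set_mset set_mset_eq_empty_iff)
      define G where "G = F - {#h#} - {#m#}"
      have m2: "m \<in># F - {#h#}" using mF False by (simp add: in_diff_count)
      have Fd: "F = add_mset h (add_mset m G)"
        unfolding G_def using insert_DiffM[OF hF, symmetric] insert_DiffM[OF m2, symmetric] by simp
      have GT: "\<forall>x\<in>#G. x \<le> T \<and> x \<le> m" using FT unfolding m_def G_def
        by (auto dest: in_diffD)
      have hT: "h \<le> T" and mT: "m \<le> T" using FT hF mF by auto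
      define V where "V = W K (Suc (Suc t))"
      define ph where "ph = ennreal (infp \<alpha> pT T h)"
      define qh where "qh = ennreal (1 - infp \<alpha> pT T h)"
      define pm where "pm = ennreal (infp \<alpha> pT T m)"
      define qm where "qm = ennreal (1 - infp \<alpha> pT T m)"
      define eh0 where "eh0 = ennreal (exp (- \<beta> * (real h + real t)))"
      define eh1 where "eh1 = ennreal (exp (- \<beta> * (real h + real (Suc t))))"
      define em0 where "em0 = ennreal (exp (- \<beta> * (real m + real t)))"
      define em1 where "em1 = ennreal (exp (- \<beta> * (real m + real (Suc t))))"
      define Jh where "Jh = (\<integral>\<^sup>+C. V (G + C) \<partial>measure_pmf (kids D h))"
      define Jm where "Jm = (\<integral>\<^sup>+C. V (G + C) \<partial>measure_pmf (kids D m))"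
      define I where "I = (\<integral>\<^sup>+C. \<integral>\<^sup>+C'. V (G + C + C') \<partial>measure_pmf (kids D m) \<partial>measure_pmf (kids D h))"
      define X where "X = ph * pm * I + ph * qm * Jh + qh * pm * Jm + qh * qm * V G"
      have L1: "W (Suc K) (Suc t) (add_mset m (G + C)) = pm * (em1 + (\<integral>\<^sup>+C'. V (G + C + C') \<partial>measure_pmf (kids D m))) + qm * V (G + C)"
        if "C \<in> set_pmf (kids D h)" for C
      proof -
        have Ch: "\<forall>x\<in>#C. x < h" using kids_set[OF that] .
        have "Max_mset (add_mset m G + C) = m"
          apply (rule Max_eqI) using Ch GT hm by auto
        moreover have "\<forall>x\<in>#add_mset m G + C. x \<le> T" using Ch GT hT mT by auto
        ultimately have "W (Suc K) (Suc t) (add_mset m (G + C)) = step V (Suc t) (add_mset m (G + C)) m"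
          unfolding V_def by (subst Wc) auto
        then show ?thesis
          by (simp add: step_def pm_def qm_def em1_def)
      qed
      have L2: "W (Suc K) (Suc t) (add_mset m G) = pm * (em1 + Jm) + qm * V G"
      proof -
        have "Max_mset (add_mset m G) = m"
          apply (rule Max_eqI) using GT by auto
        moreover have "\<forall>x\<in>#add_mset m G. x \<le> T" using GT mT by auto
        ultimately have "W (Suc K) (Suc t) (add_mset m G) = step V (Suc t) (add_mset m G) m"
          unfolding V_def by (subst Wc) auto
        then show ?thesis
          by (simp add: step_def pm_def qm_def em1_def Jm_def)
      qed
      have LHS: "step (W (Suc K) (Suc t)) t F h = ph * eh0 + ph * (pm * em1 + pm * I + qm * Jh) + qh * (pm * em1 + pm * Jm + qm * V G)"
      proof -
        have "(\<integral>\<^sup>+C. W (Suc K) (Suc t) (add_mset m (G + C)) \<partial>measure_pmf (kids D h))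
            = (\<integral>\<^sup>+C. pm * (em1 + (\<integral>\<^sup>+C'. V (G + C + C') \<partial>measure_pmf (kids D m))) + qm * V (G + C) \<partial>measure_pmf (kids D h))"
          by (rule nn_integral_cong_AE) (unfold AE_measure_pmf_iff, use L1 in blast)
        also have "\<dots> = pm * em1 + pm * I + qm * Jh"
          unfolding pmf_int_lin I_def Jh_def ..
        finally have I1: "(\<integral>\<^sup>+C. W (Suc K) (Suc t) (add_mset m (G + C)) \<partial>measure_pmf (kids D h)) = pm * em1 + pm * I + qm * Jh" .
        show ?thesis
          unfolding step_def Fd
          by (simp add: I1 L2 ph_def qh_def eh0_def distrib_left del: W.simps(2))
      qed
      have RHS: "step (\<lambda>F'. step V (Suc t) F' h) t F m = pm * em0 + pm * (ph * eh1 + ph * I + qh * Jm) + qm * (ph * eh1 + ph * Jh + qh * V G)"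
      proof -
        have "(\<integral>\<^sup>+C'. step V (Suc t) (add_mset h G + C') h \<partial>measure_pmf (kids D m))
            = (\<integral>\<^sup>+C'. ph * (eh1 + (\<integral>\<^sup>+C. V (G + C' + C) \<partial>measure_pmf (kids D h))) + qh * V (G + C') \<partial>measure_pmf (kids D m))"
          by (simp add: step_def ph_def qh_def eh1_def)
        also have "\<dots> = ph * eh1 + ph * (\<integral>\<^sup>+C'. \<integral>\<^sup>+C. V (G + C' + C) \<partial>measure_pmf (kids D h) \<partial>measure_pmf (kids D m)) + qh * Jm"
          unfolding pmf_int_lin Jm_def ..
        also have "(\<integral>\<^sup>+C'. \<integral>\<^sup>+C. V (G + C' + C) \<partial>measure_pmf (kids D h) \<partial>measure_pmf (kids D m)) = I"
          unfolding I_def by (subst pmf_fubini) (simp add: ac_simps)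
        finally have e1: "(\<integral>\<^sup>+C'. step V (Suc t) (add_mset h G + C') h \<partial>measure_pmf (kids D m)) = ph * eh1 + ph * I + qh * Jm" .
        have e2: "step V (Suc t) (add_mset h G) h = ph * eh1 + ph * Jh + qh * V G"
          by (simp add: step_def ph_def qh_def eh1_def Jh_def distrib_left)
        have Fm: "F - {#m#} = add_mset h G" unfolding Fd by simp
        show ?thesis unfolding step_def[of "\<lambda>F'. step V (Suc t) F' h"] Fm e1 e2
          unfolding pm_def[symmetric] qm_def[symmetric] em0_def[symmetric]
          by (simp add: distrib_left)
      qed
      have geq: "step (\<lambda>F'. step V (Suc t) F' h) t F m \<le> step (W (Suc K) (Suc t)) t F m"
        unfolding step_def[of "\<lambda>F'. step V (Suc t) F' h"] step_def[of "W (Suc K) (Suc t)"]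
      proof (intro add_mono mult_left_mono nn_integral_mono order_refl)
        show "step V (Suc t) (F - {#m#}) h \<le> W (Suc K) (Suc t) (F - {#m#})"
          unfolding V_def using Fd by (intro W_ge) auto
        fix C show "step V (Suc t) (F - {#m#} + C) h \<le> W (Suc K) (Suc t) (F - {#m#} + C)"
          unfolding V_def using Fd by (intro W_ge) auto
      qed auto
      have pq1: "ph + qh = 1" "pm + qm = 1"
        unfolding ph_def qh_def pm_def qm_def
        using infp_ge0 infp_le1[OF hT] infp_le1[OF mT]
        by (simp_all flip: ennreal_plus)
      have "ph * eh0 + ph * (pm * em1 + pm * I + qm * Jh) + qh * (pm * em1 + pm * Jm + qm * V G)
          = ph * eh0 + (ph + qh) * (pm * em1) + X"
        unfolding X_def by (rule ring_eq1)
      also have "\<dots> = ennreal (infp \<alpha> pT T h * exp (- \<beta> * (real h + real t)) + infp \<alpha> pT T m * exp (- \<beta> * (real m + real (Suc t)))) + X"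
        unfolding pq1 mult_1_left unfolding ph_def eh0_def pm_def em1_def using infp_ge0
        by (simp add: ennreal_mult' infp_ge0)
      also have "\<dots> \<le> ennreal (infp \<alpha> pT T m * exp (- \<beta> * (real m + real t)) + infp \<alpha> pT T h * exp (- \<beta> * (real h + real (Suc t)))) + X"
        by (intro add_mono ennreal_leI swap_ineq hm order_refl)
      also have "\<dots> = pm * em0 + (pm + qm) * (ph * eh1) + X"
        unfolding pq1 mult_1_left unfolding ph_def eh1_def pm_def em0_def using infp_ge0
        by (simp add: ennreal_mult' infp_ge0)
      also have "\<dots> = pm * em0 + pm * (ph * eh1 + ph * I + qh * Jm) + qm * (ph * eh1 + ph * Jh + qh * V G)"
        unfolding X_def by (rule ring_eq2[symmetric])
      finally show ?thesis using LHS RHS geq m_def by simp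
    qed
  qed
qed


lemma W_max:
  assumes "F \<noteq> {#}" "\<forall>x\<in>#F. x \<le> T"
  shows "W (Suc N) t F = step (W N (Suc t)) t F (Max_mset F)"
proof -
  have "Max (step (W N (Suc t)) t F ` set_mset F) = step (W N (Suc t)) t F (Max_mset F)"
    apply (rule Max_eqI)
    using assms key by auto
  then show ?thesis using assms by simp
qed

lemma greedy_val: "\<forall>x\<in>#F. x \<le> T \<Longrightarrow> val \<alpha> \<beta> pT T D greedy F0 N H F = W N (length H) F"
proof (induction N arbitrary: H F)
  case 0 then show ?case by simp
next
  case (Suc N)
  show ?case
  proof (cases "F = {#}")
    case True then show ?thesis by simp
  next
    case False
    define m where "m = Max_mset F"
    have mF: "m \<in># F" unfolding m_def using False
      by (metis Max_in empty_iff finite_set_mset set_mset_eq_empty_iff)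
    have q: "qchoice (greedy F0 H F) F = m" unfolding qchoice_def greedy_def m_def[symmetric] using mF by simp
    have T1: "\<forall>x\<in>#F - {#m#}. x \<le> T" using Suc.prems by (auto dest: in_diffD)
    have mT: "m \<le> T" using Suc.prems mF by auto
    have IC: "(\<integral>\<^sup>+ C. val \<alpha> \<beta> pT T D greedy F0 N (H @ [(m, Some C)]) (F - {#m#} + C) \<partial>measure_pmf (kids D m))
      = (\<integral>\<^sup>+ C. W N (Suc (length H)) (F - {#m#} + C) \<partial>measure_pmf (kids D m))"
    proof (rule nn_integral_cong_AE, unfold AE_measure_pmf_iff, intro ballI)
      fix C assume "C \<in> set_pmf (kids D m)"
      then have "\<forall>x\<in>#F - {#m#} + C. x \<le> T" using kids_set T1 mT by fastforce
      then show "val \<alpha> \<beta> pT T D greedy F0 N (H @ [(m, Some C)]) (F - {#m#} + C) = W N (Suc (length H)) (F - {#m#} + C)"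
        using Suc.IH by simp
    qed
    have "val \<alpha> \<beta> pT T D greedy F0 (Suc N) H F = step (W N (Suc (length H))) (length H) F m"
      using False unfolding step_def by (simp add: Let_def q IC Suc.IH[OF T1])
    also have "\<dots> = W (Suc N) (length H) F" using W_max[OF False Suc.prems] m_def by simp
    finally show ?thesis .
  qed
qed

end

theorem theorem6p5:
  fixes \<alpha> \<beta> pT :: real and T :: nat and D :: "nat pmf"
  assumes "\<alpha> > \<beta>" and "\<beta> > 0" and "0 < pT" and "pT \<le> 1"
  shows "optimal \<alpha> \<beta> pT T D greedy"
proof -
  interpret ct \<alpha> \<beta> pT T D using assms by unfold_locales
  show ?thesis unfolding optimal_def
  proof (intro allI impI)
    fix F0 :: "nat multiset" and pol' assume F0: "\<forall>h\<in>#F0. h \<le> T"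
    have "total \<alpha> \<beta> pT T D pol' F0 \<le> (SUP N. W N 0 F0)"
      unfolding total_def using val_le[of pol' F0 _ "[]" F0] by (intro SUP_mono) auto
    also have "\<dots> = total \<alpha> \<beta> pT T D greedy F0"
      unfolding total_def using greedy_val[OF F0, of F0 _ "[]"] by simp
    finally show "total \<alpha> \<beta> pT T D pol' F0 \<le> total \<alpha> \<beta> pT T D greedy F0" .
  qed
qed

end
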